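(* Let $k\ge 1$, let $\alpha=\alpha(t,x,x_1)$, $\beta=\beta(t,x,x_1)$, $\gamma^{(1)}=\gamma^{(1)}(t,x,x_1)$ be smooth with $\beta-\alpha x_1\neq 0$, and let $\tau^{(k)}=\alpha\partial_t+\beta\partial_x+\sum_{i=1}^k\gamma^{(i)}\partial_{x_i}$ be the telescopic vector field with $\gamma^{(i)}$, $2\le i\le k$, defined by $$\gamma^{(i)}=D_t(\gamma^{(i-1)})-D_t(\alpha)x_i+\frac{\gamma^{(1)}+x_1D_t\alpha-D_t\beta}{\beta-x_1\alpha}\big(\gamma^{(i-1)}-\alpha x_i\big).$$ Then, as derivations acting on functions of $(t,x,x_1,\ldots,x_{k-1})$, $$[\tau^{(k)},D_t]=\lambda\,\tau^{(k)}+\mu\,D_t,\qquad \lambda=\frac{\gamma^{(1)}+x_1D_t\alpha-D_t\beta}{\beta-x_1\alpha},\quad \mu=-(D_t+\lambda)(\alpha).$$ Consequently, the coefficients of $\tau^{(k)}$ satisfy the $\lambda$-prolongation recurrence for this $\lambda$ (which depends on $(t,x,x_1,x_2)$), i.e. formally $\tau^{(k)}=(\alpha\partial_t+\beta\partial_x)^{[\lambda,(k)]}$.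
   Context: Jet coordinates $(t,x,x_1,x_2,\ldots)$, $x_i=d^ix/dt^i$; $D_t=\partial_t+x_1\partial_x+x_2\partial_{x_1}+\cdots$ the total derivative. For functions $\rho,\phi^0,\lambda$ possibly depending on finitely many jet variables, the formal $\lambda$-prolongation $(\rho\partial_t+\phi^0\partial_x)^{[\lambda,(k)]}=\rho\partial_t+\phi^0\partial_x+\sum_{i=1}^k\phi^{[\lambda,(i)]}\partial_{x_i}$ is defined by $\phi^{[\lambda,(0)]}=\phi^0$ and $\phi^{[\lambda,(i)]}=D_t(\phi^{[\lambda,(i-1)]})-D_t(\rho)x_i+\lambda(\phi^{[\lambda,(i-1)]}-\rho x_i)$. *)

theory Defs
  imports "HOL-Analysis.Analysis"
begin

text \<open>Jet coordinates: T is t, X 0 is x, X i is x_i = d^i x / dt^i.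
  A jet point is an assignment of real values to all coordinates; a jet function
  is a real-valued function of a jet point.\<close>

datatype coord = T | X nat

type_synonym jetfun = "(coord \<Rightarrow> real) \<Rightarrow> real"

definition jet_order :: "jetfun \<Rightarrow> nat \<Rightarrow> bool" where
  "jet_order f n \<longleftrightarrow>
     (\<forall>p q. p T = q T \<and> (\<forall>i\<le>n. p (X i) = q (X i)) \<longrightarrow> f p = f q)"

definition jord :: "jetfun \<Rightarrow> nat" where
  "jord f = (LEAST n. jet_order f n)"

definition pd :: "coord \<Rightarrow> jetfun \<Rightarrow> jetfun" where
  "pd c f p = deriv (\<lambda>s. f (p(c := s))) (p c)"

fun iter_pd :: "coord list \<Rightarrow> jetfun \<Rightarrow> jetfun" where
  "iter_pd [] f = f"
| "iter_pd (c # cs) f = pd c (iter_pd cs f)"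

text \<open>Smooth function of finitely many jet variables: all iterated partial derivatives
  exist and are continuous (product topology; equivalent to continuity in the
  finitely many variables f depends on).\<close>
definition jsmooth :: "jetfun \<Rightarrow> bool" where
  "jsmooth f \<longleftrightarrow> (\<exists>n. jet_order f n) \<and>
     (\<forall>cs. continuous_on UNIV (iter_pd cs f) \<and>
        (\<forall>c p. (\<lambda>s. iter_pd cs f (p(c := s))) differentiable (at (p c))))"

definition Dt :: "jetfun \<Rightarrow> jetfun" where
  "Dt f p = pd T f p + (\<Sum>i\<le>jord f. p (X (Suc i)) * pd (X i) f p)"

text \<open>Formal lambda-prolongation coefficients phi^{[lambda,(i)]} of rho d_t + phi0 d_x.\<close>
fun prolong :: "jetfun \<Rightarrow> jetfun \<Rightarrow> jetfun \<Rightarrow> nat \<Rightarrow> jetfun" where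
  "prolong rho phi0 lam 0 = phi0"
| "prolong rho phi0 lam (Suc i) = (\<lambda>p.
     Dt (prolong rho phi0 lam i) p - Dt rho p * p (X (Suc i))
     + lam p * (prolong rho phi0 lam i p - rho p * p (X (Suc i))))"

definition tlam :: "jetfun \<Rightarrow> jetfun \<Rightarrow> jetfun \<Rightarrow> jetfun" where
  "tlam a b g1 p = (g1 p + p (X 1) * Dt a p - Dt b p) / (b p - p (X 1) * a p)"

text \<open>Telescopic coefficients gamma^{(i)}, i \<ge> 1 (index 0 is unused and set to beta).\<close>
fun tgam :: "jetfun \<Rightarrow> jetfun \<Rightarrow> jetfun \<Rightarrow> nat \<Rightarrow> jetfun" where
  "tgam a b g1 0 = b"
| "tgam a b g1 (Suc 0) = g1"
| "tgam a b g1 (Suc (Suc i)) = (\<lambda>p.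
     Dt (tgam a b g1 (Suc i)) p - Dt a p * p (X (Suc (Suc i)))
     + tlam a b g1 p * (tgam a b g1 (Suc i) p - a p * p (X (Suc (Suc i)))))"

definition ttau :: "nat \<Rightarrow> jetfun \<Rightarrow> jetfun \<Rightarrow> jetfun \<Rightarrow> jetfun \<Rightarrow> jetfun" where
  "ttau k a b g1 f p = a p * pd T f p + b p * pd (X 0) f p
     + (\<Sum>i=1..k. tgam a b g1 i p * pd (X i) f p)"

end

theory Submission
  imports Defs
begin


lemma dist_box:
  fixes x0 y0 a b r :: real
  assumes "\<bar>a\<bar> < r" "\<bar>b\<bar> < r"
  shows "dist (x0 + a, y0 + b) (x0, y0) < 2 * r"
proof -
  have "dist (x0 + a, y0 + b) (x0, y0) \<le> dist (x0 + a, y0 + b) (x0, y0 + b) + dist (x0, y0 + b) (x0, y0)"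
    by (rule dist_triangle)
  also have "\<dots> = \<bar>a\<bar> + \<bar>b\<bar>" by (simp add: dist_Pair_Pair dist_real_def)
  finally show ?thesis using assms by linarith
qed

lemma schwarz2:
  fixes h hx hy hxy hyx :: "real \<Rightarrow> real \<Rightarrow> real"
  assumes d1: "\<And>x y. ((\<lambda>x. h x y) has_real_derivative hx x y) (at x)"
    and d2: "\<And>x y. ((\<lambda>y. hx x y) has_real_derivative hxy x y) (at y)"
    and d3: "\<And>x y. ((\<lambda>y. h x y) has_real_derivative hy x y) (at y)"
    and d4: "\<And>x y. ((\<lambda>x. hy x y) has_real_derivative hyx x y) (at x)"
    and c1: "continuous_on UNIV (\<lambda>z. hxy (fst z) (snd z))"
    and c2: "continuous_on UNIV (\<lambda>z. hyx (fst z) (snd z))"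
  shows "hxy x0 y0 = hyx x0 y0"
proof -
  have key: "\<exists>u v u' v'. x0 < u \<and> u < x0 + s \<and> y0 < v \<and> v < y0 + s \<and>
     x0 < u' \<and> u' < x0 + s \<and> y0 < v' \<and> v' < y0 + s \<and> hxy u v = hyx u' v'" if s: "s > 0" for s
  proof -
    define D where "D = h (x0+s) (y0+s) - h (x0+s) y0 - h x0 (y0+s) + h x0 y0"
    have der1: "\<And>x. ((\<lambda>x. h x (y0+s) - h x y0) has_real_derivative hx x (y0+s) - hx x y0) (at x)"
      by (intro DERIV_diff d1)
    obtain u where u: "x0 < u" "u < x0 + s"
      "(h (x0+s) (y0+s) - h (x0+s) y0) - (h x0 (y0+s) - h x0 y0) = (x0 + s - x0) * (hx u (y0+s) - hx u y0)"
      using MVT2[of x0 "x0+s", OF _ der1] s by auto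
    obtain v where v: "y0 < v" "v < y0 + s" "hx u (y0+s) - hx u y0 = (y0 + s - y0) * hxy u v"
      using MVT2[of y0 "y0+s" "\<lambda>y. hx u y" "\<lambda>y. hxy u y"] s d2 by auto
    have der2: "\<And>y. ((\<lambda>y. h (x0+s) y - h x0 y) has_real_derivative hy (x0+s) y - hy x0 y) (at y)"
      by (intro DERIV_diff d3)
    obtain v' where v': "y0 < v'" "v' < y0 + s"
      "(h (x0+s) (y0+s) - h x0 (y0+s)) - (h (x0+s) y0 - h x0 y0) = (y0 + s - y0) * (hy (x0+s) v' - hy x0 v')"
      using MVT2[of y0 "y0+s", OF _ der2] s by auto
    obtain u' where u': "x0 < u'" "u' < x0 + s" "hy (x0+s) v' - hy x0 v' = (x0 + s - x0) * hyx u' v'"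
      using MVT2[of x0 "x0+s" "\<lambda>x. hy x v'" "\<lambda>x. hyx x v'"] s d4 by auto
    have "s * (s * hxy u v) = s * (s * hyx u' v')"
      using u(3) v(3) v'(3) u'(3) by (simp add: algebra_simps)
    then have "hxy u v = hyx u' v'" using s by simp
    then show ?thesis using u v u' v' by blast
  qed
  show ?thesis
  proof (rule ccontr)
    assume ne: "hxy x0 y0 \<noteq> hyx x0 y0"
    define e where "e = \<bar>hxy x0 y0 - hyx x0 y0\<bar> / 2"
    have e: "e > 0" using ne by (simp add: e_def)
    obtain d1 where d1: "d1 > 0" "\<And>z. dist z (x0, y0) < d1 \<Longrightarrow> dist (hxy (fst z) (snd z)) (hxy x0 y0) < e"
      using c1 e unfolding continuous_on_iff by (metis UNIV_I fst_conv snd_conv)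
    obtain d2 where d2: "d2 > 0" "\<And>z. dist z (x0, y0) < d2 \<Longrightarrow> dist (hyx (fst z) (snd z)) (hyx x0 y0) < e"
      using c2 e unfolding continuous_on_iff by (metis UNIV_I fst_conv snd_conv)
    define s where "s = min d1 d2 / 2"
    have s: "s > 0" using d1 d2 by (simp add: s_def)
    obtain u v u' v' where uv: "x0 < u" "u < x0 + s" "y0 < v" "v < y0 + s"
      "x0 < u'" "u' < x0 + s" "y0 < v'" "v' < y0 + s" "hxy u v = hyx u' v'"
      using key[OF s] by blast
    have "dist (x0 + (u - x0), y0 + (v - y0)) (x0, y0) < 2 * s"
      by (rule dist_box) (use uv in auto)
    then have "dist (hxy u v) (hxy x0 y0) < e" using d1(2)[of "(u,v)"] s_def by auto
    moreover have "dist (x0 + (u' - x0), y0 + (v' - y0)) (x0, y0) < 2 * s"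
      by (rule dist_box) (use uv in auto)
    then have "dist (hyx u' v') (hyx x0 y0) < e" using d2(2)[of "(u',v')"] s_def by auto
    ultimately show False using uv(9) unfolding e_def dist_real_def by (auto simp: abs_real_def split: if_splits)
  qed
qed




lemma jet_order_mono: "jet_order f n \<Longrightarrow> n \<le> N \<Longrightarrow> jet_order f N"
  unfolding jet_order_def by auto

lemma jet_order_const: "jet_order (\<lambda>p. r) n"
  unfolding jet_order_def by auto

lemma pd_const: "pd c (\<lambda>p. r) p = 0"
  unfolding pd_def by simp

lemma pd_coord: "pd c (\<lambda>q. q d) p = (if c = d then 1 else 0)"
proof (cases "c = d")
  case True
  then show ?thesis unfolding pd_def by simp
next
  case False
  then show ?thesis unfolding pd_def by simp
qed

lemma pd_high: assumes "jet_order f n" "n < i" shows "pd (X i) f p = 0"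
proof -
  have "(\<lambda>s. f (p(X i := s))) = (\<lambda>s. f p)"
  proof
    fix s
    from assms(1) have J: "\<And>p q. p T = q T \<Longrightarrow> (\<forall>j\<le>n. p (X j) = q (X j)) \<Longrightarrow> f p = f q"
      unfolding jet_order_def by blast
    show "f (p(X i := s)) = f p" by (rule J) (use assms(2) in auto)
  qed
  then show ?thesis unfolding pd_def by simp
qed

lemma jet_order_pd: assumes "jet_order f n" shows "jet_order (pd c f) n"
  unfolding jet_order_def
proof (intro allI impI)
  fix p q :: "coord \<Rightarrow> real"
  assume pq: "p T = q T \<and> (\<forall>i\<le>n. p (X i) = q (X i))"
  show "pd c f p = pd c f q"
  proof (cases "\<exists>i. c = X i \<and> n < i")
    case True
    then obtain i where "c = X i" "n < i" by blast
    then show ?thesis using pd_high[OF assms] by simp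
  next
    case False
    then have pc: "p c = q c" using pq by (cases c) auto
    from assms have J: "\<And>p q. p T = q T \<Longrightarrow> (\<forall>j\<le>n. p (X j) = q (X j)) \<Longrightarrow> f p = f q"
      unfolding jet_order_def by blast
    have "\<And>s. f (p(c := s)) = f (q(c := s))" by (rule J) (use pq in auto)
    then show ?thesis unfolding pd_def using pc by simp
  qed
qed

lemma Dt_expand:
  assumes "jet_order g N"
  shows "Dt g p = pd T g p + (\<Sum>i\<le>N. p (X (Suc i)) * pd (X i) g p)"
proof -
  have ex: "jet_order g (jord g)" unfolding jord_def using assms by (rule LeastI)
  have le: "jord g \<le> N" unfolding jord_def using assms by (rule Least_le)
  have "(\<Sum>i\<le>jord g. p (X (Suc i)) * pd (X i) g p) = (\<Sum>i\<le>N. p (X (Suc i)) * pd (X i) g p)"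
    by (rule sum.mono_neutral_left) (use le pd_high[OF ex] in auto)
  then show ?thesis unfolding Dt_def by simp
qed

lemma pd_DERIV:
  assumes "(\<lambda>s. f (q(c := s))) differentiable (at (q c))"
  shows "((\<lambda>s. f (q(c := s))) has_real_derivative pd c f q) (at (q c))"
  using assms unfolding pd_def by (simp add: DERIV_deriv_iff_real_differentiable)

lemma upd3: "c \<noteq> d \<Longrightarrow> p(c := x, d := y, c := s) = p(c := s, d := y)"
  by (auto simp: fun_eq_iff)

lemma cont_comp2:
  assumes "continuous_on UNIV F"
  shows "continuous_on UNIV (\<lambda>z::real\<times>real. F (p(c := fst z, d := snd z)))"
proof -
  have g: "continuous_on UNIV (\<lambda>z::real\<times>real. p(c := fst z, d := snd z))"
  proof (rule continuous_on_coordinatewise_then_product)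
    fix i
    show "continuous_on UNIV (\<lambda>z::real\<times>real. (p(c := fst z, d := snd z)) i)"
      by (cases "i = d"; cases "i = c") (auto intro: continuous_intros)
  qed
  show ?thesis by (rule continuous_on_compose2[OF assms g]) auto
qed

lemma jsmooth_diff: "jsmooth f \<Longrightarrow> (\<lambda>s. iter_pd cs f (p(c := s))) differentiable (at (p c))"
  unfolding jsmooth_def by blast

lemma jsmooth_cont: "jsmooth f \<Longrightarrow> continuous_on UNIV (iter_pd cs f)"
  unfolding jsmooth_def by blast

lemma jsmooth_diff0: "jsmooth f \<Longrightarrow> (\<lambda>s. f (p(c := s))) differentiable (at (p c))"
  using jsmooth_diff[of f "[]"] by simp

lemma jsmooth_diff1: "jsmooth f \<Longrightarrow> (\<lambda>s. pd d f (p(c := s))) differentiable (at (p c))"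
  using jsmooth_diff[of f "[d]"] by simp

lemma pd_comm:
  assumes f: "jsmooth f"
  shows "pd c (pd d f) p = pd d (pd c f) p"
proof (cases "c = d")
  case True then show ?thesis by simp
next
  case cd: False
  have cd': "d \<noteq> c" using cd by auto
  have "pd d (pd c f) (p(c := p c, d := p d)) = pd c (pd d f) (p(c := p c, d := p d))"
  proof (rule schwarz2[where h = "\<lambda>x y. f (p(c := x, d := y))"
        and hx = "\<lambda>x y. pd c f (p(c := x, d := y))" and hy = "\<lambda>x y. pd d f (p(c := x, d := y))"
        and hxy = "\<lambda>x y. pd d (pd c f) (p(c := x, d := y))"
        and hyx = "\<lambda>x y. pd c (pd d f) (p(c := x, d := y))"])
    fix x y
    let ?q = "p(c := x, d := y)"
    have ec: "?q c = x" using cd by simp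
    have ed: "?q d = y" by simp
    have u1: "\<And>s. ?q(c := s) = p(c := s, d := y)" using cd by (rule upd3)
    have u2: "\<And>s. ?q(d := s) = p(c := x, d := s)" by simp
    show "((\<lambda>x. f (p(c := x, d := y))) has_real_derivative pd c f ?q) (at x)"
      using pd_DERIV[OF jsmooth_diff0[OF f, of ?q c]] unfolding ec u1 .
    show "((\<lambda>y. pd c f (p(c := x, d := y))) has_real_derivative pd d (pd c f) ?q) (at y)"
      using pd_DERIV[OF jsmooth_diff1[OF f, of c ?q d]] unfolding ed u2 .
    show "((\<lambda>y. f (p(c := x, d := y))) has_real_derivative pd d f ?q) (at y)"
      using pd_DERIV[OF jsmooth_diff0[OF f, of ?q d]] unfolding ed u2 .
    show "((\<lambda>x. pd d f (p(c := x, d := y))) has_real_derivative pd c (pd d f) ?q) (at x)"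
      using pd_DERIV[OF jsmooth_diff1[OF f, of d ?q c]] unfolding ec u1 .
next
    show "continuous_on UNIV (\<lambda>z. pd d (pd c f) (p(c := fst z, d := snd z)))"
      by (rule cont_comp2) (use jsmooth_cont[OF f, of "[d, c]"] in simp)
    show "continuous_on UNIV (\<lambda>z. pd c (pd d f) (p(c := fst z, d := snd z)))"
      by (rule cont_comp2) (use jsmooth_cont[OF f, of "[c, d]"] in simp)
  qed
  then show ?thesis by simp
qed




abbreviation dfb :: "jetfun \<Rightarrow> coord \<Rightarrow> (coord \<Rightarrow> real) \<Rightarrow> bool" where
  "dfb f c p \<equiv> (\<lambda>s. f (p(c := s))) differentiable (at (p c))"

lemma pd_mult:
  assumes "dfb f c p" "dfb g c p"
  shows "pd c (\<lambda>q. f q * g q) p = pd c f p * g p + f p * pd c g p"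
proof -
  have "((\<lambda>s. f (p(c := s)) * g (p(c := s))) has_real_derivative
      pd c f p * g (p(c := p c)) + pd c g p * f (p(c := p c))) (at (p c))"
    by (rule DERIV_mult[OF pd_DERIV[OF assms(1)] pd_DERIV[OF assms(2)]])
  then show ?thesis unfolding pd_def[of c "\<lambda>q. f q * g q"] by (simp add: DERIV_imp_deriv)
qed

lemma pd_add:
  assumes "dfb f c p" "dfb g c p"
  shows "pd c (\<lambda>q. f q + g q) p = pd c f p + pd c g p"
proof -
  have "((\<lambda>s. f (p(c := s)) + g (p(c := s))) has_real_derivative pd c f p + pd c g p) (at (p c))"
    by (rule DERIV_add[OF pd_DERIV[OF assms(1)] pd_DERIV[OF assms(2)]])
  then show ?thesis unfolding pd_def[of c "\<lambda>q. f q + g q"] by (simp add: DERIV_imp_deriv)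
qed

lemma pd_diff:
  assumes "dfb f c p" "dfb g c p"
  shows "pd c (\<lambda>q. f q - g q) p = pd c f p - pd c g p"
proof -
  have "((\<lambda>s. f (p(c := s)) - g (p(c := s))) has_real_derivative pd c f p - pd c g p) (at (p c))"
    by (rule DERIV_diff[OF pd_DERIV[OF assms(1)] pd_DERIV[OF assms(2)]])
  then show ?thesis unfolding pd_def[of c "\<lambda>q. f q - g q"] by (simp add: DERIV_imp_deriv)
qed

lemma pd_inverse:
  assumes "dfb f c p" "f p \<noteq> 0"
  shows "pd c (\<lambda>q. inverse (f q)) p = - (inverse (f p) * pd c f p * inverse (f p))"
proof -
  have "((\<lambda>s. inverse (f (p(c := s)))) has_real_derivative
      - (inverse (f (p(c := p c))) * pd c f p * inverse (f (p(c := p c))))) (at (p c))"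
    by (rule DERIV_inverse'[OF pd_DERIV[OF assms(1)]]) (use assms(2) in simp)
  then show ?thesis unfolding pd_def[of c "\<lambda>q. inverse (f q)"] by (simp add: DERIV_imp_deriv)
qed

lemma pd_sum:
  assumes "finite I" "\<And>i. i \<in> I \<Longrightarrow> dfb (F i) c p"
  shows "pd c (\<lambda>q. \<Sum>i\<in>I. F i q) p = (\<Sum>i\<in>I. pd c (F i) p)"
proof -
  have "((\<lambda>s. \<Sum>i\<in>I. F i (p(c := s))) has_real_derivative (\<Sum>i\<in>I. pd c (F i) p)) (at (p c))"
    by (rule DERIV_sum) (rule pd_DERIV[OF assms(2)])
  then show ?thesis unfolding pd_def[of c "\<lambda>q. \<Sum>i\<in>I. F i q"] by (simp add: DERIV_imp_deriv)
qed

inductive_set A :: "jetfun set" where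
  base: "jsmooth f \<Longrightarrow> f \<in> A"
| coord: "(\<lambda>p. p c) \<in> A"
| const: "(\<lambda>p. r) \<in> A"
| add: "f \<in> A \<Longrightarrow> g \<in> A \<Longrightarrow> (\<lambda>p. f p + g p) \<in> A"
| diff: "f \<in> A \<Longrightarrow> g \<in> A \<Longrightarrow> (\<lambda>p. f p - g p) \<in> A"
| mul: "f \<in> A \<Longrightarrow> g \<in> A \<Longrightarrow> (\<lambda>p. f p * g p) \<in> A"
| inv: "f \<in> A \<Longrightarrow> (\<forall>p. f p \<noteq> 0) \<Longrightarrow> (\<lambda>p. inverse (f p)) \<in> A"

lemma jsmooth_pd: assumes "jsmooth f" shows "jsmooth (pd c f)"
proof -
  have it: "\<And>cs. iter_pd cs (pd c f) = iter_pd (cs @ [c]) f"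
    by (induct_tac cs) auto
  obtain n where "jet_order f n" using assms unfolding jsmooth_def by blast
  then have "jet_order (pd c f) n" by (rule jet_order_pd)
  then show ?thesis using assms unfolding jsmooth_def it by blast
qed

lemma jsmooth_order: "jsmooth f \<Longrightarrow> \<exists>n. jet_order f n"
  unfolding jsmooth_def by blast

lemma jet_order_coord: "\<exists>n. jet_order (\<lambda>p. p c) n"
proof (cases c)
  case T then show ?thesis unfolding jet_order_def by auto
next
  case (X i) then show ?thesis unfolding jet_order_def by auto
qed

lemma jet_order_add2:
  assumes "jet_order f n" "jet_order g m"
  shows "jet_order (\<lambda>p. H (f p) (g p)) (n + m)"
proof -
  have f: "jet_order f (n + m)" by (rule jet_order_mono[OF assms(1)]) simp
  have g: "jet_order g (n + m)" by (rule jet_order_mono[OF assms(2)]) simp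
  show ?thesis using f g unfolding jet_order_def by metis
qed

lemma A_props:
  "f \<in> A \<Longrightarrow> (\<exists>n. jet_order f n) \<and> (\<forall>c p. dfb f c p) \<and> (\<forall>c. pd c f \<in> A)"
proof (induction rule: A.induct)
  case (base f)
  then show ?case using jsmooth_order jsmooth_diff0 jsmooth_pd A.base by blast
next
  case (coord d)
  have "\<And>c. pd c (\<lambda>p. p d) = (\<lambda>p. if c = d then 1 else 0)"
    by (rule ext) (rule pd_coord)
  moreover have "\<And>c p. dfb (\<lambda>p. p d) c p"
  proof -
    fix c p show "dfb (\<lambda>p. p d) c p" by (cases "d = c") auto
  qed
  moreover have "\<And>c. pd c (\<lambda>p. p d) \<in> A"
  proof -
    fix c show "pd c (\<lambda>p. p d) \<in> A"
    proof -
      have e: "pd c (\<lambda>p. p d) = (\<lambda>p. if c = d then 1 else 0)" by (rule ext, rule pd_coord)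
      show ?thesis unfolding e by (rule A.const)
    qed
  qed
  ultimately show ?case using jet_order_coord[of d] by blast
next
  case (const r)
  have "\<And>c. pd c (\<lambda>p. r) = (\<lambda>p. 0)" by (rule ext) (rule pd_const)
  then show ?case using jet_order_const A.const by auto
next
  case (add f g)
  have eq: "\<And>c. pd c (\<lambda>p. f p + g p) = (\<lambda>p. pd c f p + pd c g p)"
    by (rule ext) (rule pd_add, use add.IH in blast, use add.IH in blast)
  moreover have "\<And>c p. dfb (\<lambda>p. f p + g p) c p" using add.IH by (intro differentiable_add; blast)
  moreover have "\<exists>n. jet_order (\<lambda>p. f p + g p) n" using add.IH jet_order_add2[where H="(+)"] by blast
  moreover have "\<And>c. (\<lambda>p. pd c f p + pd c g p) \<in> A"
    using add.IH add.hyps by (intro A.add; blast)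
  then have "\<And>c. pd c (\<lambda>p. f p + g p) \<in> A" by (simp only: eq)
  ultimately show ?case by blast
next
  case (diff f g)
  have eq: "\<And>c. pd c (\<lambda>p. f p - g p) = (\<lambda>p. pd c f p - pd c g p)"
    by (rule ext) (rule pd_diff, use diff.IH in blast, use diff.IH in blast)
  moreover have "\<And>c p. dfb (\<lambda>p. f p - g p) c p" using diff.IH by (intro differentiable_diff; blast)
  moreover have "\<exists>n. jet_order (\<lambda>p. f p - g p) n" using diff.IH jet_order_add2[where H="(-)"] by blast
  moreover have "\<And>c. (\<lambda>p. pd c f p - pd c g p) \<in> A"
    using diff.IH diff.hyps by (intro A.diff; blast)
  then have "\<And>c. pd c (\<lambda>p. f p - g p) \<in> A" by (simp only: eq)
  ultimately show ?case by blast
next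
  case (mul f g)
  have eq: "\<And>c. pd c (\<lambda>p. f p * g p) = (\<lambda>p. pd c f p * g p + f p * pd c g p)"
    by (rule ext) (rule pd_mult, use mul.IH in blast, use mul.IH in blast)
  moreover have "\<And>c p. dfb (\<lambda>p. f p * g p) c p" using mul.IH by (intro differentiable_mult; blast)
  moreover have "\<exists>n. jet_order (\<lambda>p. f p * g p) n" using mul.IH jet_order_add2[where H="(*)"] by blast
  moreover have "\<And>c. (\<lambda>p. pd c f p * g p + f p * pd c g p) \<in> A"
    using mul.IH mul.hyps by (intro A.add A.mul; blast)
  then have "\<And>c. pd c (\<lambda>p. f p * g p) \<in> A" by (simp only: eq)
  ultimately show ?case by blast
next
  case (inv f)
  have nz: "\<And>p. f p \<noteq> 0" using inv.hyps by blast
  have df: "\<And>c p. dfb f c p" using inv.IH by blast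
  have eq: "\<And>c. pd c (\<lambda>p. inverse (f p)) = (\<lambda>p. (- 1) * (inverse (f p) * pd c f p * inverse (f p)))"
    by (rule ext) (subst pd_inverse[OF df nz], simp)
  moreover have "\<And>c. (\<lambda>p. (- 1) * (inverse (f p) * pd c f p * inverse (f p))) \<in> A"
    using inv.IH inv.hyps by (intro A.mul A.const A.inv; blast)
  then have "\<And>c. pd c (\<lambda>p. inverse (f p)) \<in> A" by (simp only: eq)
  moreover obtain n where "jet_order f n" using inv by blast
  then have "jet_order (\<lambda>p. inverse (f p)) (n + n)" using jet_order_add2[where H="\<lambda>x y. inverse x"] by blast
  moreover have "\<And>c p. dfb (\<lambda>p. inverse (f p)) c p"
  proof -
    fix c p
    show "dfb (\<lambda>p. inverse (f p)) c p"
      by (rule differentiable_inverse[OF df]) (simp add: nz)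
  qed
  ultimately show ?case by blast
qed

lemma A_order: "f \<in> A \<Longrightarrow> \<exists>n. jet_order f n" using A_props by blast
lemma A_dfb: "f \<in> A \<Longrightarrow> dfb f c p" using A_props by blast
lemma A_pd: "f \<in> A \<Longrightarrow> pd c f \<in> A" using A_props by blast

lemma A_sum: "(\<And>i. i \<le> (n::nat) \<Longrightarrow> F i \<in> A) \<Longrightarrow> (\<lambda>p. \<Sum>i\<le>n. F i p) \<in> A"
proof (induction n)
  case 0 then show ?case by simp
next
  case (Suc n)
  then show ?case using A.add[of "\<lambda>p. \<Sum>i\<le>n. F i p" "F (Suc n)"] by simp
qed

lemma A_Dt: assumes "f \<in> A" shows "Dt f \<in> A"
proof -
  obtain n where n: "jet_order f n" using A_order[OF assms] by blast
  have "Dt f = (\<lambda>p. pd T f p + (\<Sum>i\<le>n. p (X (Suc i)) * pd (X i) f p))"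
    by (rule ext) (rule Dt_expand[OF n])
  moreover have "(\<lambda>p. pd T f p + (\<Sum>i\<le>n. p (X (Suc i)) * pd (X i) f p)) \<in> A"
    by (intro A.add A_sum A.mul A.coord A_pd assms)
  ultimately show ?thesis by simp
qed




lemma Dt_add:
  assumes u: "u \<in> A" and v: "v \<in> A"
  shows "Dt (\<lambda>q. u q + v q) p = Dt u p + Dt v p"
proof -
  obtain nu where nu: "jet_order u nu" using A_order[OF u] by blast
  obtain nv where nv: "jet_order v nv" using A_order[OF v] by blast
  let ?N = "nu + nv"
  have ju: "jet_order u ?N" by (rule jet_order_mono[OF nu]) simp
  have jv: "jet_order v ?N" by (rule jet_order_mono[OF nv]) simp
  have juv: "jet_order (\<lambda>q. u q + v q) ?N" using jet_order_add2[OF nu nv, where H="(+)"] .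
  have du: "\<And>c p. dfb u c p" using A_dfb[OF u] by blast
  have dv: "\<And>c p. dfb v c p" using A_dfb[OF v] by blast
  have pa: "\<And>c p. pd c (\<lambda>q. u q + v q) p = pd c u p + pd c v p" by (rule pd_add[OF du dv])
  show ?thesis
    unfolding Dt_expand[OF juv] Dt_expand[OF ju] Dt_expand[OF jv] pa
    by (simp add: sum.distrib algebra_simps)
qed

lemma Dt_mult:
  assumes u: "u \<in> A" and v: "v \<in> A"
  shows "Dt (\<lambda>q. u q * v q) p = Dt u p * v p + u p * Dt v p"
proof -
  obtain nu where nu: "jet_order u nu" using A_order[OF u] by blast
  obtain nv where nv: "jet_order v nv" using A_order[OF v] by blast
  let ?N = "nu + nv"
  have ju: "jet_order u ?N" by (rule jet_order_mono[OF nu]) simp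
  have jv: "jet_order v ?N" by (rule jet_order_mono[OF nv]) simp
  have juv: "jet_order (\<lambda>q. u q * v q) ?N" using jet_order_add2[OF nu nv, where H="(*)"] .
  have du: "\<And>c p. dfb u c p" using A_dfb[OF u] by blast
  have dv: "\<And>c p. dfb v c p" using A_dfb[OF v] by blast
  have pa: "\<And>c p. pd c (\<lambda>q. u q * v q) p = pd c u p * v p + u p * pd c v p" by (rule pd_mult[OF du dv])
  show ?thesis
    unfolding Dt_expand[OF juv] Dt_expand[OF ju] Dt_expand[OF jv] pa
    by (simp add: sum.distrib sum_distrib_left sum_distrib_right algebra_simps)
qed

lemma Dt_sum:
  fixes n :: nat
  assumes "\<And>i. i \<le> n \<Longrightarrow> F i \<in> A"
  shows "Dt (\<lambda>q. \<Sum>i\<le>n. F i q) p = (\<Sum>i\<le>n. Dt (F i) p)"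
  using assms
proof (induction n)
  case 0 then show ?case by simp
next
  case (Suc n)
  have s: "(\<lambda>q. \<Sum>i\<le>Suc n. F i q) = (\<lambda>q. (\<Sum>i\<le>n. F i q) + F (Suc n) q)" by simp
  have "Dt (\<lambda>q. (\<Sum>i\<le>n. F i q) + F (Suc n) q) p = Dt (\<lambda>q. \<Sum>i\<le>n. F i q) p + Dt (F (Suc n)) p"
    by (rule Dt_add) (use Suc.prems A_sum in auto)
  then show ?case unfolding s using Suc by simp
qed

lemma Dt_zero: "Dt (\<lambda>q. 0) p = 0"
  unfolding Dt_def by (simp add: pd_const)


lemma tgam_rec:
  assumes nz: "\<forall>p. b p - a p * p (X 1) \<noteq> 0"
  shows "tgam a b g1 (Suc j) p = Dt (tgam a b g1 j) p - Dt a p * p (X (Suc j))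
     + tlam a b g1 p * (tgam a b g1 j p - a p * p (X (Suc j)))"
proof (cases j)
  case 0
  have "b p - p (X 1) * a p \<noteq> 0" using nz by (metis mult.commute)
  then show ?thesis using 0 by (simp add: tlam_def field_simps)
next
  case (Suc j') then show ?thesis by simp
qed

lemma tgam_prolong:
  assumes nz: "\<forall>p. b p - a p * p (X 1) \<noteq> 0"
  shows "tgam a b g1 j = prolong a b (tlam a b g1) j"
proof (induction j)
  case 0 then show ?case by simp
next
  case (Suc j)
  show ?case by (rule ext) (simp only: tgam_rec[OF nz] prolong.simps Suc)
qed

lemma tlam_A:
  assumes "jsmooth a" "jsmooth b" "jsmooth g1" "\<forall>p. b p - a p * p (X 1) \<noteq> 0"
  shows "tlam a b g1 \<in> A"
proof -
  have e: "tlam a b g1 = (\<lambda>p. (g1 p + p (X 1) * Dt a p - Dt b p) * inverse (b p - p (X 1) * a p))"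
    by (rule ext) (simp add: tlam_def divide_inverse)
  have nz: "\<forall>p. b p - p (X 1) * a p \<noteq> 0" using assms(4) by (simp add: mult.commute)
  show ?thesis unfolding e
    by (intro A.mul A.diff A.add A.coord A_Dt A.base A.inv assms nz)
qed

lemma tgam_A:
  assumes "jsmooth a" "jsmooth b" "jsmooth g1" and nz: "\<forall>p. b p - a p * p (X 1) \<noteq> 0"
  shows "tgam a b g1 j \<in> A"
proof (induction j)
  case 0 then show ?case using assms by (simp add: A.base)
next
  case (Suc j)
  have e: "tgam a b g1 (Suc j) = (\<lambda>p. Dt (tgam a b g1 j) p - Dt a p * p (X (Suc j))
     + tlam a b g1 p * (tgam a b g1 j p - a p * p (X (Suc j))))"
    by (rule ext) (rule tgam_rec[OF nz])
  show ?case unfolding e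
    by (intro A.mul A.diff A.add A.coord A_Dt A.base tlam_A assms Suc)
qed

lemma ttau_alt:
  "ttau k a b g1 g p = a p * pd T g p + (\<Sum>i\<le>k. tgam a b g1 i p * pd (X i) g p)"
  unfolding ttau_def by (simp add: atMost_atLeast0 sum.atLeast_Suc_atMost)


lemma pd_Dt:
  assumes f: "jsmooth f" and fo: "jet_order f m"
  shows "pd c (Dt f) p = Dt (pd c f) p + (\<Sum>j\<le>m. if c = X (Suc j) then pd (X j) f p else 0)"
proof -
  have fA: "f \<in> A" using f by (rule A.base)
  let ?F = "\<lambda>j q. q (X (Suc j)) * pd (X j) f q"
  have FA: "\<And>j. ?F j \<in> A" by (intro A.mul A.coord A_pd fA)
  have e: "Dt f = (\<lambda>q. pd T f q + (\<Sum>j\<le>m. ?F j q))"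
    by (rule ext) (rule Dt_expand[OF fo])
  have d1: "\<And>c p. dfb (pd T f) c p" by (rule A_dfb[OF A_pd[OF fA]])
  have d2: "\<And>c p. dfb (\<lambda>q. \<Sum>j\<le>m. ?F j q) c p" by (rule A_dfb[OF A_sum[OF FA]])
  have s1: "pd c (\<lambda>q. pd T f q + (\<Sum>j\<le>m. ?F j q)) p = pd c (pd T f) p + pd c (\<lambda>q. \<Sum>j\<le>m. ?F j q) p"
    by (rule pd_add[OF d1 d2])
  have s2: "pd c (\<lambda>q. \<Sum>j\<le>m. ?F j q) p = (\<Sum>j\<le>m. pd c (?F j) p)"
    by (rule pd_sum) (simp, rule A_dfb[OF FA])
  have s3: "pd c (?F j) p = (if c = X (Suc j) then pd (X j) f p else 0) + p (X (Suc j)) * pd c (pd (X j) f) p" for j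
  proof -
    have dc: "\<And>c p. dfb (\<lambda>q. q (X (Suc j))) c p" by (rule A_dfb[OF A.coord])
    have dd: "\<And>c p. dfb (pd (X j) f) c p" by (rule A_dfb[OF A_pd[OF fA]])
    show ?thesis unfolding pd_mult[OF dc dd] pd_coord by simp
  qed
  have jo: "jet_order (pd c f) m" by (rule jet_order_pd[OF fo])
  have "Dt (pd c f) p = pd c (pd T f) p + (\<Sum>j\<le>m. p (X (Suc j)) * pd c (pd (X j) f) p)"
    unfolding Dt_expand[OF jo] pd_comm[OF f, of T c] pd_comm[OF f, of "X _" c] ..
  then show ?thesis unfolding e s1 s2 s3 by (simp add: sum.distrib)
qed


lemma commutator:
  assumes sa: "jsmooth a" and sb: "jsmooth b" and sg: "jsmooth g1"
    and nz: "\<forall>p. b p - a p * p (X 1) \<noteq> 0"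
    and f: "jsmooth f" and fo: "jet_order f m"
  shows "ttau (Suc m) a b g1 (Dt f) p - Dt (ttau (Suc m) a b g1 f) p
        = tlam a b g1 p * ttau (Suc m) a b g1 f p
          + (- (Dt a p + tlam a b g1 p * a p)) * Dt f p"
proof -
  let ?gm = "tgam a b g1" and ?lam = "tlam a b g1"
  let ?P = "\<lambda>j. pd (X j) f p"
  have fA: "f \<in> A" using f by (rule A.base)
  have aA: "a \<in> A" using sa by (rule A.base)
  have gA: "\<And>i. ?gm i \<in> A" by (rule tgam_A[OF sa sb sg nz])
  have z: "pd (X (Suc m)) f = (\<lambda>q. 0)" by (rule ext) (rule pd_high[OF fo], simp)
  have dsum: "(\<Sum>i\<le>Suc m. ?gm i p * (\<Sum>j\<le>m. if X i = X (Suc j) then ?P j else 0))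
      = (\<Sum>j\<le>m. ?gm (Suc j) p * ?P j)"
  proof -
    have "(\<Sum>i\<le>Suc m. ?gm i p * (\<Sum>j\<le>m. if X i = X (Suc j) then ?P j else 0))
        = (\<Sum>i\<le>Suc m. \<Sum>j\<le>m. if i = Suc j then ?gm i p * ?P j else 0)"
      unfolding sum_distrib_left by (intro sum.cong refl) auto
    also have "\<dots> = (\<Sum>j\<le>m. \<Sum>i\<le>Suc m. if i = Suc j then ?gm i p * ?P j else 0)"
      by (rule sum.swap)
    also have "\<dots> = (\<Sum>j\<le>m. ?gm (Suc j) p * ?P j)"
      by (rule sum.cong) (simp_all add: sum.delta)
    finally show ?thesis .
  qed
  have T1: "ttau (Suc m) a b g1 (Dt f) p = a p * Dt (pd T f) p
      + (\<Sum>i\<le>m. ?gm i p * Dt (pd (X i) f) p) + (\<Sum>j\<le>m. ?gm (Suc j) p * ?P j)"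
  proof -
    have "ttau (Suc m) a b g1 (Dt f) p = a p * Dt (pd T f) p
      + (\<Sum>i\<le>Suc m. ?gm i p * Dt (pd (X i) f) p)
      + (\<Sum>i\<le>Suc m. ?gm i p * (\<Sum>j\<le>m. if X i = X (Suc j) then ?P j else 0))"
      unfolding ttau_alt pd_Dt[OF f fo] by (simp add: sum.distrib algebra_simps)
    also have "(\<Sum>i\<le>Suc m. ?gm i p * Dt (pd (X i) f) p) = (\<Sum>i\<le>m. ?gm i p * Dt (pd (X i) f) p)"
      by (simp add: z Dt_zero)
    finally show ?thesis unfolding dsum .
  qed
  have e3: "ttau (Suc m) a b g1 f = (\<lambda>q. a q * pd T f q + (\<Sum>i\<le>m. ?gm i q * pd (X i) f q))"
    by (rule ext) (simp add: ttau_alt z)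
  have T3: "ttau (Suc m) a b g1 f p = a p * pd T f p + (\<Sum>i\<le>m. ?gm i p * ?P i)"
    unfolding e3 ..
  have T2: "Dt (ttau (Suc m) a b g1 f) p = Dt a p * pd T f p + a p * Dt (pd T f) p
      + (\<Sum>i\<le>m. Dt (?gm i) p * ?P i + ?gm i p * Dt (pd (X i) f) p)"
  proof -
    have m1: "(\<lambda>q. a q * pd T f q) \<in> A" by (intro A.mul aA A_pd fA)
    have m2: "(\<lambda>q. \<Sum>i\<le>m. ?gm i q * pd (X i) f q) \<in> A" by (intro A_sum A.mul gA A_pd fA)
    show ?thesis unfolding e3 Dt_add[OF m1 m2] Dt_mult[OF aA A_pd[OF fA]]
      Dt_sum[of m "\<lambda>i q. ?gm i q * pd (X i) f q", OF A.mul[OF gA A_pd[OF fA]]]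
      Dt_mult[OF gA A_pd[OF fA]] ..
  qed
  have T4: "Dt f p = pd T f p + (\<Sum>j\<le>m. p (X (Suc j)) * ?P j)" by (rule Dt_expand[OF fo])
  have R: "(\<Sum>j\<le>m. ?gm (Suc j) p * ?P j) = (\<Sum>j\<le>m. Dt (?gm j) p * ?P j
     + ?lam p * (?gm j p * ?P j) - (Dt a p + ?lam p * a p) * (p (X (Suc j)) * ?P j))"
    by (rule sum.cong) (simp_all add: tgam_rec[OF nz] algebra_simps)
  show ?thesis unfolding T1 T2 T3 T4 R
    by (simp add: sum.distrib sum_subtractf sum_distrib_left sum_negf algebra_simps)
qed


theorem theorem2p3:
  fixes k :: nat and a b g1 :: jetfun
  assumes "k \<ge> 1"
    and "jsmooth a" and "jsmooth b" and "jsmooth g1"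
    and "jet_order a 1" and "jet_order b 1" and "jet_order g1 1"
    and "\<forall>p. b p - a p * p (X 1) \<noteq> 0"
  shows "(\<forall>f. jsmooth f \<and> jet_order f (k - 1) \<longrightarrow>
           (\<forall>p. ttau k a b g1 (Dt f) p - Dt (ttau k a b g1 f) p
                = tlam a b g1 p * ttau k a b g1 f p
                  + (- (Dt a p + tlam a b g1 p * a p)) * Dt f p))
      \<and> (\<forall>i\<in>{1..k}. \<forall>p. tgam a b g1 i p = prolong a b (tlam a b g1) i p)"
proof -
  obtain m where k: "k = Suc m" using assms(1) by (cases k) auto
  have P1: "\<forall>f. jsmooth f \<and> jet_order f (k - 1) \<longrightarrow>
           (\<forall>p. ttau k a b g1 (Dt f) p - Dt (ttau k a b g1 f) p
                = tlam a b g1 p * ttau k a b g1 f p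
                  + (- (Dt a p + tlam a b g1 p * a p)) * Dt f p)"
  proof (intro allI impI)
    fix f p
    assume h: "jsmooth f \<and> jet_order f (k - 1)"
    then have fo: "jet_order f m" using k by simp
    show "ttau k a b g1 (Dt f) p - Dt (ttau k a b g1 f) p
                = tlam a b g1 p * ttau k a b g1 f p
                  + (- (Dt a p + tlam a b g1 p * a p)) * Dt f p"
      unfolding k by (rule commutator[OF assms(2,3,4,8)]) (use h fo in auto)
  qed
  have P2: "\<forall>i\<in>{1..k}. \<forall>p. tgam a b g1 i p = prolong a b (tlam a b g1) i p"
    using tgam_prolong[OF assms(8)] by simp
  show ?thesis using P1 P2 by blast
qed

end
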